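(* Consider the model below with $M=M_f=N=1$ (full-information rational expectations) and $\epsilon_2\ge 0$, and fix all parameters other than $\epsilon_1$. Then there exists $\bar{\epsilon}_{REE}\in[-\infty,\infty)$, depending only on $(\beta,\sigma,\lambda,\mu,\psi,p,q,\epsilon_2)$, such that for every $\epsilon_1\in\mathbb{R}$ a rational expectations equilibrium (REE) exists if and only if $\epsilon_1\ge\bar{\epsilon}_{REE}$.
   Context: Parameters: $0<\beta<1$, $\sigma>0$, $\lambda>0$, $\mu>0$, $\psi>1$, $p,q\in(0,1]$. The demand shock $\epsilon_t$ is a two-state Markov chain on $\{\epsilon_1,\epsilon_2\}\subset\mathbb{R}$ with $\Pr(\epsilon_{t+1}=\epsilon_1\mid\epsilon_t=\epsilon_1)=p$, $\Pr(\epsilon_{t+1}=\epsilon_2\mid\epsilon_t=\epsilon_2)=q$. The model (with discount parameters $M,M_f,N\in(0,1]$) is $x_t=M\hat E_t x_{t+1}-\sigma(i_t-N\hat E_t\pi_{t+1})+\epsilon_t$, $\pi_t=\lambda x_t+M_f\beta\hat E_t\pi_{t+1}$, $i_t=\max\{\psi\pi_t,-\mu\}$, where $x_t$ is the output gap, $\pi_t$ inflation, $i_t$ the nominal rate. An REE (with $M=M_f=N=1$) is a pair $Y_j=(x_j,\pi_j)\in\mathbb{R}^2$, $j=1,2$ (the values of $(x_t,\pi_t)$ when $\epsilon_t=\epsilon_j$), such that for $j=1,2$, with $i_j=\max\{\psi\pi_j,-\mu\}$: $x_j=x^e_j-\sigma(i_j-\pi^e_j)+\epsilon_j$ and $\pi_j=\lambda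 x_j+\beta\pi^e_j$, where $(x^e_1,\pi^e_1)=pY_1+(1-p)Y_2$ and $(x^e_2,\pi^e_2)=(1-q)Y_1+qY_2$ (the Markov conditional expectations). *)

theory Defs
  imports Complex_Main "HOL-Library.Extended_Real"
begin

text \<open>REE of the two-state model with M = M_f = N = 1.
  State j has values (x_j, pi_j); nominal rate i_j = max (psi pi_j) (-mu);
  expectations are Markov conditional expectations with
  Pr(1|1) = p, Pr(2|2) = q.\<close>

definition is_REE ::
  "real \<Rightarrow> real \<Rightarrow> real \<Rightarrow> real \<Rightarrow> real \<Rightarrow> real \<Rightarrow> real \<Rightarrow> real \<Rightarrow> real
   \<Rightarrow> real \<Rightarrow> real \<Rightarrow> real \<Rightarrow> real \<Rightarrow> bool" where
  "is_REE \<beta> \<sigma> lam \<mu> \<psi> p q \<epsilon>1 \<epsilon>2 x1 \<pi>1 x2 \<pi>2 \<longleftrightarrow>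
     (let i1 = max (\<psi> * \<pi>1) (- \<mu>);
          i2 = max (\<psi> * \<pi>2) (- \<mu>);
          xe1 = p * x1 + (1 - p) * x2;
          pie1 = p * \<pi>1 + (1 - p) * \<pi>2;
          xe2 = (1 - q) * x1 + q * x2;
          pie2 = (1 - q) * \<pi>1 + q * \<pi>2
      in x1 = xe1 - \<sigma> * (i1 - pie1) + \<epsilon>1 \<and>
         \<pi>1 = lam * x1 + \<beta> * pie1 \<and>
         x2 = xe2 - \<sigma> * (i2 - pie2) + \<epsilon>2 \<and>
         \<pi>2 = lam * x2 + \<beta> * pie2)"

definition REE_exists ::
  "real \<Rightarrow> real \<Rightarrow> real \<Rightarrow> real \<Rightarrow> real \<Rightarrow> real \<Rightarrow> real \<Rightarrow> real \<Rightarrow> real \<Rightarrow> bool" where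
  "REE_exists \<beta> \<sigma> lam \<mu> \<psi> p q \<epsilon>1 \<epsilon>2 \<longleftrightarrow>
     (\<exists>x1 \<pi>1 x2 \<pi>2. is_REE \<beta> \<sigma> lam \<mu> \<psi> p q \<epsilon>1 \<epsilon>2 x1 \<pi>1 x2 \<pi>2)"

end

theory Submission
  imports Defs
begin

definition hf :: "real \<Rightarrow> real \<Rightarrow> real \<Rightarrow> real \<Rightarrow> real" where
  "hf \<sigma> \<psi> \<mu> x = \<sigma> * (max (\<psi> * x) (- \<mu>) - x)"

lemma reduce:
  assumes "lam \<noteq> 0"
  shows "REE_exists \<beta> \<sigma> lam \<mu> \<psi> p q e1 e2 \<longleftrightarrow>
    (\<exists>\<pi>1 \<pi>2. e1 = ((1 - \<beta>*(p+q-1))/lam + \<sigma>) * (1-p) * (\<pi>1 - \<pi>2) + hf \<sigma> \<psi> \<mu> \<pi>1 \<and>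
              e2 = ((1 - \<beta>*(p+q-1))/lam + \<sigma>) * (1-q) * (\<pi>2 - \<pi>1) + hf \<sigma> \<psi> \<mu> \<pi>2)"
proof
  assume "REE_exists \<beta> \<sigma> lam \<mu> \<psi> p q e1 e2"
  then obtain x1 \<pi>1 x2 \<pi>2 where R: "is_REE \<beta> \<sigma> lam \<mu> \<psi> p q e1 e2 x1 \<pi>1 x2 \<pi>2"
    unfolding REE_exists_def by blast
  define I1 where "I1 = max (\<psi> * \<pi>1) (- \<mu>)"
  define I2 where "I2 = max (\<psi> * \<pi>2) (- \<mu>)"
  have e: "x1 = p * x1 + (1 - p) * x2 - \<sigma> * (I1 - (p * \<pi>1 + (1 - p) * \<pi>2)) + e1"
     "\<pi>1 = lam * x1 + \<beta> * (p * \<pi>1 + (1 - p) * \<pi>2)"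
     "x2 = (1 - q) * x1 + q * x2 - \<sigma> * (I2 - ((1 - q) * \<pi>1 + q * \<pi>2)) + e2"
     "\<pi>2 = lam * x2 + \<beta> * ((1 - q) * \<pi>1 + q * \<pi>2)"
    using R unfolding is_REE_def I1_def I2_def Let_def by auto
  have "lam * (x1 - x2) = (1 - \<beta>*(p+q-1)) * (\<pi>1 - \<pi>2)"
    using e(2) e(4) by (simp add: algebra_simps)
  then have lx0: "x1 - x2 = (1 - \<beta>*(p+q-1)) / lam * (\<pi>1 - \<pi>2)"
    using assms by (simp add: field_simps)
  define D where "D = (1 - \<beta>*(p+q-1)) / lam"
  have lx: "x1 - x2 = D * (\<pi>1 - \<pi>2)" using lx0 D_def by simp
  have a1: "e1 = (1-p) * (x1 - x2) + \<sigma> * (I1 - \<pi>1) + \<sigma> * (1-p) * (\<pi>1 - \<pi>2)"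
    using e(1) by (simp add: algebra_simps)
  have a2: "e2 = (1-q) * (- (x1 - x2)) + \<sigma> * (I2 - \<pi>2) + \<sigma> * (1-q) * (\<pi>2 - \<pi>1)"
    using e(3) by (simp add: algebra_simps)
  have "e1 = ((1 - \<beta>*(p+q-1))/lam + \<sigma>) * (1-p) * (\<pi>1 - \<pi>2) + hf \<sigma> \<psi> \<mu> \<pi>1"
    unfolding D_def[symmetric] a1 lx hf_def I1_def[symmetric] by (simp add: algebra_simps)
  moreover have "e2 = ((1 - \<beta>*(p+q-1))/lam + \<sigma>) * (1-q) * (\<pi>2 - \<pi>1) + hf \<sigma> \<psi> \<mu> \<pi>2"
    unfolding D_def[symmetric] a2 hf_def I2_def[symmetric] lx by (simp add: algebra_simps)
  ultimately show "\<exists>\<pi>1 \<pi>2. e1 = ((1 - \<beta>*(p+q-1))/lam + \<sigma>) * (1-p) * (\<pi>1 - \<pi>2) + hf \<sigma> \<psi> \<mu> \<pi>1 \<and>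
              e2 = ((1 - \<beta>*(p+q-1))/lam + \<sigma>) * (1-q) * (\<pi>2 - \<pi>1) + hf \<sigma> \<psi> \<mu> \<pi>2" by blast
next
  assume "\<exists>\<pi>1 \<pi>2. e1 = ((1 - \<beta>*(p+q-1))/lam + \<sigma>) * (1-p) * (\<pi>1 - \<pi>2) + hf \<sigma> \<psi> \<mu> \<pi>1 \<and>
              e2 = ((1 - \<beta>*(p+q-1))/lam + \<sigma>) * (1-q) * (\<pi>2 - \<pi>1) + hf \<sigma> \<psi> \<mu> \<pi>2"
  then obtain \<pi>1 \<pi>2 where F: "e1 = ((1 - \<beta>*(p+q-1))/lam + \<sigma>) * (1-p) * (\<pi>1 - \<pi>2) + hf \<sigma> \<psi> \<mu> \<pi>1"
     "e2 = ((1 - \<beta>*(p+q-1))/lam + \<sigma>) * (1-q) * (\<pi>2 - \<pi>1) + hf \<sigma> \<psi> \<mu> \<pi>2" by blast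
  define I1 where "I1 = max (\<psi> * \<pi>1) (- \<mu>)"
  define I2 where "I2 = max (\<psi> * \<pi>2) (- \<mu>)"
  define x1 where "x1 = (\<pi>1 - \<beta> * (p * \<pi>1 + (1 - p) * \<pi>2)) / lam"
  define x2 where "x2 = (\<pi>2 - \<beta> * ((1 - q) * \<pi>1 + q * \<pi>2)) / lam"
  have F1: "e1 = ((1 - \<beta>*(p+q-1))/lam + \<sigma>) * (1-p) * (\<pi>1 - \<pi>2) + \<sigma> * (I1 - \<pi>1)"
    using F(1) unfolding hf_def I1_def .
  have F2: "e2 = ((1 - \<beta>*(p+q-1))/lam + \<sigma>) * (1-q) * (\<pi>2 - \<pi>1) + \<sigma> * (I2 - \<pi>2)"
    using F(2) unfolding hf_def I2_def .
  have l1: "\<pi>1 = lam * x1 + \<beta> * (p * \<pi>1 + (1 - p) * \<pi>2)"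
    unfolding x1_def using assms by (simp add: field_simps)
  have l2: "\<pi>2 = lam * x2 + \<beta> * ((1 - q) * \<pi>1 + q * \<pi>2)"
    unfolding x2_def using assms by (simp add: field_simps)
  have "lam * (x1 - x2) = (1 - \<beta>*(p+q-1)) * (\<pi>1 - \<pi>2)"
    using l1 l2 by (simp add: algebra_simps)
  then have lx0: "x1 - x2 = (1 - \<beta>*(p+q-1)) / lam * (\<pi>1 - \<pi>2)"
    using assms by (simp add: field_simps)
  define D where "D = (1 - \<beta>*(p+q-1)) / lam"
  have lx: "x1 - x2 = D * (\<pi>1 - \<pi>2)" using lx0 D_def by simp
  have "x1 = p * x1 + (1 - p) * x2 - \<sigma> * (I1 - (p * \<pi>1 + (1 - p) * \<pi>2)) + e1"
  proof -
    have "e1 = (1-p) * (x1 - x2) + \<sigma> * (I1 - \<pi>1) + \<sigma> * (1-p) * (\<pi>1 - \<pi>2)"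
      unfolding F1 D_def[symmetric] lx by (simp add: algebra_simps)
    then show ?thesis by (simp add: algebra_simps)
  qed
  moreover have "x2 = (1 - q) * x1 + q * x2 - \<sigma> * (I2 - ((1 - q) * \<pi>1 + q * \<pi>2)) + e2"
  proof -
    have "e2 = (1-q) * (- (x1 - x2)) + \<sigma> * (I2 - \<pi>2) + \<sigma> * (1-q) * (\<pi>2 - \<pi>1)"
      unfolding F2 D_def[symmetric] lx by (simp add: algebra_simps)
    then show ?thesis by (simp add: algebra_simps)
  qed
  ultimately have "is_REE \<beta> \<sigma> lam \<mu> \<psi> p q e1 e2 x1 \<pi>1 x2 \<pi>2"
    using l1 l2 unfolding is_REE_def I1_def I2_def Let_def by simp
  then show "REE_exists \<beta> \<sigma> lam \<mu> \<psi> p q e1 e2" unfolding REE_exists_def by blast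
qed


lemma up_reach:
  fixes G :: "real \<Rightarrow> real"
  assumes cont: "continuous_on UNIV G"
    and right: "\<forall>s\<ge>T'. G s = A'*s + B'" and "A' > 0"
    and "G s0 \<le> y"
  shows "\<exists>s. G s = y"
proof -
  define s1 where "s1 = max (max T' s0) ((y - B')/A')"
  have "s1 \<ge> T'" "s1 \<ge> s0" "s1 \<ge> (y - B')/A'" unfolding s1_def by auto
  then have "A' * s1 \<ge> y - B'" using \<open>A' > 0\<close> by (simp add: field_simps)
  then have "G s1 \<ge> y" using right \<open>s1 \<ge> T'\<close> by auto
  from IVT'[of G s0 y s1, OF assms(4) this \<open>s1 \<ge> s0\<close>] cont
  show ?thesis by (auto intro: continuous_on_subset)
qed

lemma key:
  fixes G :: "real \<Rightarrow> real"
  assumes cont: "continuous_on UNIV G"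
    and left: "\<forall>s\<le>T. G s = A*s + B"
    and right: "\<forall>s\<ge>T'. G s = A'*s + B'" and "A' > 0"
  shows "\<exists>e::ereal. e < \<infinity> \<and> (\<forall>y. (\<exists>s. G s = y) \<longleftrightarrow> ereal y \<ge> e)"
proof (cases "A > 0")
  case True
  have "\<exists>s. G s = y" for y
  proof -
    define s0 where "s0 = min T ((y - B)/A)"
    have "s0 \<le> T" "s0 \<le> (y - B)/A" unfolding s0_def by auto
    then have "A * s0 \<le> y - B" using True by (simp add: field_simps)
    then have "G s0 \<le> y" using left \<open>s0 \<le> T\<close> by auto
    then show ?thesis using up_reach[OF cont right \<open>A' > 0\<close>] by blast
  qed
  then show ?thesis by (intro exI[of _ "-\<infinity>"]) auto
next
  case False
  define T0 where "T0 = min T T'"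
  have "T0 \<le> T'" "T0 \<le> T" unfolding T0_def by auto
  obtain m where m: "m \<in> {T0..T'}" "\<forall>z\<in>{T0..T'}. G m \<le> G z"
  proof -
    have "continuous_on {T0..T'} G" using cont by (rule continuous_on_subset) auto
    then show ?thesis using continuous_attains_inf[of "{T0..T'}" G] \<open>T0 \<le> T'\<close> that by auto
  qed
  have glob: "G m \<le> G z" for z
  proof (cases "z \<le> T0")
    case True
    have "G z = A*z + B" using left True \<open>T0 \<le> T\<close> by auto
    also have "\<dots> \<ge> A*T0 + B" using False True by (simp add: mult_left_mono_neg)
    also have "A*T0 + B = G T0" using left \<open>T0 \<le> T\<close> by auto
    finally have "G T0 \<le> G z" .
    moreover have "G m \<le> G T0" using m(2) \<open>T0 \<le> T'\<close> by auto
    ultimately show ?thesis by linarith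
  next
    case f2: False
    show ?thesis
    proof (cases "z \<le> T'")
      case True then show ?thesis using m f2 by auto
    next
      case f3: False
      have "G z = A'*z + B'" using right f3 by auto
      also have "\<dots> \<ge> A'*T' + B'" using \<open>A' > 0\<close> f3 by simp
      also have "A'*T' + B' = G T'" using right by auto
      finally have "G T' \<le> G z" .
      moreover have "G m \<le> G T'" using m(2) \<open>T0 \<le> T'\<close> by auto
      ultimately show ?thesis by linarith
    qed
  qed
  show ?thesis
  proof (intro exI[of _ "ereal (G m)"] conjI allI iffI)
    fix y assume "\<exists>s. G s = y" then show "ereal (G m) \<le> ereal y" using glob by auto
  next
    fix y assume "ereal (G m) \<le> ereal y"
    then show "\<exists>s. G s = y" using up_reach[OF cont right \<open>A' > 0\<close>, of m y] by auto
  qed auto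
qed


lemma hf_left: "\<psi> > 0 \<Longrightarrow> x \<le> -\<mu>/\<psi> \<Longrightarrow> hf \<sigma> \<psi> \<mu> x = \<sigma> * (-\<mu> - x)"
  unfolding hf_def by (simp add: field_simps max_def)

lemma hf_right: "\<psi> * x \<ge> -\<mu> \<Longrightarrow> hf \<sigma> \<psi> \<mu> x = \<sigma> * (\<psi> - 1) * x"
  unfolding hf_def by (simp add: algebra_simps max_def)

lemma hf_cont[continuous_intros]: "continuous_on S (\<lambda>x. hf \<sigma> \<psi> \<mu> (f x))" if "continuous_on S f"
  unfolding hf_def using that by (intro continuous_intros)

lemma hf_left_aff:
  assumes "\<psi> > 0" "\<mu> > 0"
  shows "\<exists>T A B. \<forall>s\<le>T. hf \<sigma> \<psi> \<mu> (\<alpha>*s+\<gamma>) = A*s + B"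
proof -
  consider "\<alpha> > 0" | "\<alpha> < 0" | "\<alpha> = 0" by linarith
  then show ?thesis
  proof cases
    case 1
    have "\<forall>s\<le>(-\<mu>/\<psi> - \<gamma>)/\<alpha>. hf \<sigma> \<psi> \<mu> (\<alpha>*s+\<gamma>) = (-\<sigma>*\<alpha>)*s + (-\<sigma>*\<mu> - \<sigma>*\<gamma>)"
    proof (intro allI impI)
      fix s assume "s \<le> (-\<mu>/\<psi> - \<gamma>)/\<alpha>"
      then have "\<alpha>*s \<le> -\<mu>/\<psi> - \<gamma>" using 1 by (simp add: field_simps)
      then show "hf \<sigma> \<psi> \<mu> (\<alpha>*s+\<gamma>) = (-\<sigma>*\<alpha>)*s + (-\<sigma>*\<mu> - \<sigma>*\<gamma>)"
        using hf_left[OF assms(1), of "\<alpha>*s+\<gamma>" \<mu> \<sigma>] by (simp add: algebra_simps)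
    qed
    then show ?thesis by blast
  next
    case 2
    have "\<forall>s\<le>(-\<gamma>)/\<alpha>. hf \<sigma> \<psi> \<mu> (\<alpha>*s+\<gamma>) = (\<sigma> * (\<psi> - 1)*\<alpha>)*s + \<sigma> * (\<psi> - 1)*\<gamma>"
    proof (intro allI impI)
      fix s assume "s \<le> (-\<gamma>)/\<alpha>"
      then have "\<alpha>*s \<ge> -\<gamma>" using 2 by (simp add: field_simps)
      then have "\<psi> * (\<alpha>*s+\<gamma>) \<ge> -\<mu>" using assms
        by (smt (verit) mult_nonneg_nonneg)
      then show "hf \<sigma> \<psi> \<mu> (\<alpha>*s+\<gamma>) = (\<sigma> * (\<psi> - 1)*\<alpha>)*s + \<sigma> * (\<psi> - 1)*\<gamma>"
        using hf_right[of \<mu> \<psi> "\<alpha>*s+\<gamma>" \<sigma>] by (simp add: algebra_simps)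
    qed
    then show ?thesis by blast
  next
    case 3 then show ?thesis by (intro exI[of _ 0] exI[of _ 0] exI[of _ "hf \<sigma> \<psi> \<mu> \<gamma>"]) auto
  qed
qed

lemma hf_right_aff:
  assumes "\<psi> > 0" "\<mu> > 0" "\<alpha> > 0"
  shows "\<exists>T. \<forall>s\<ge>T. hf \<sigma> \<psi> \<mu> (\<alpha>*s+\<gamma>) = \<sigma> * (\<psi> - 1) * (\<alpha>*s+\<gamma>)"
proof -
  have "\<forall>s\<ge>(-\<gamma>)/\<alpha>. hf \<sigma> \<psi> \<mu> (\<alpha>*s+\<gamma>) = \<sigma> * (\<psi> - 1) * (\<alpha>*s+\<gamma>)"
  proof (intro allI impI)
    fix s assume "s \<ge> (-\<gamma>)/\<alpha>"
    then have "\<alpha>*s \<ge> -\<gamma>" using assms by (simp add: field_simps)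
    then have "\<psi> * (\<alpha>*s+\<gamma>) \<ge> -\<mu>" using assms
      by (smt (verit) mult_nonneg_nonneg)
    then show "hf \<sigma> \<psi> \<mu> (\<alpha>*s+\<gamma>) = \<sigma> * (\<psi> - 1) * (\<alpha>*s+\<gamma>)"
      using hf_right by blast
  qed
  then show ?thesis by blast
qed



theorem proposition1:
  fixes \<beta> \<sigma> lam \<mu> \<psi> p q \<epsilon>2 :: real
  assumes "0 < \<beta>" "\<beta> < 1" "0 < \<sigma>" "0 < lam" "0 < \<mu>" "1 < \<psi>"
    and "0 < p" "p \<le> 1" "0 < q" "q \<le> 1"
    and "0 \<le> \<epsilon>2"
  shows "\<exists>\<epsilon>bar :: ereal. \<epsilon>bar < \<infinity> \<and>
           (\<forall>\<epsilon>1 :: real. REE_exists \<beta> \<sigma> lam \<mu> \<psi> p q \<epsilon>1 \<epsilon>2 \<longleftrightarrow> ereal \<epsilon>1 \<ge> \<epsilon>bar)"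
proof -
  define c where "c = (1 - \<beta>*(p+q-1))/lam + \<sigma>"
  have "\<beta>*(p+q-1) < 1"
  proof (cases "p+q-1 \<ge> 0")
    case True
    then have "\<beta>*(p+q-1) \<le> \<beta> * 1" using assms by (intro mult_left_mono) auto
    then show ?thesis using assms by linarith
  next
    case False
    then have "\<beta>*(p+q-1) < 0" using assms by (simp add: mult_pos_neg)
    then show ?thesis by linarith
  qed
  then have "(1 - \<beta>*(p+q-1))/lam > 0" using assms by simp
  then have cpos: "c > 0" unfolding c_def using assms by simp
  have red: "REE_exists \<beta> \<sigma> lam \<mu> \<psi> p q e1 \<epsilon>2 \<longleftrightarrow>
    (\<exists>\<pi>1 \<pi>2. e1 = c * (1-p) * (\<pi>1 - \<pi>2) + hf \<sigma> \<psi> \<mu> \<pi>1 \<and>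
              \<epsilon>2 = c * (1-q) * (\<pi>2 - \<pi>1) + hf \<sigma> \<psi> \<mu> \<pi>2)" for e1
    unfolding c_def using reduce[of lam] assms by simp
  have psi0: "\<psi> > 0" using assms by simp
  have a0: "c * (1-p) \<ge> 0" using cpos assms by simp
  show ?thesis
  proof (cases "q < 1")
    case True
    define b where "b = c * (1-q)"
    have bpos: "b > 0" unfolding b_def using True cpos by simp
    define P1 where "P1 s = s + (hf \<sigma> \<psi> \<mu> s - \<epsilon>2)/b" for s
    define G where "G s = c*(1-p)*(P1 s - s) + hf \<sigma> \<psi> \<mu> (P1 s)" for s
    have eqv: "REE_exists \<beta> \<sigma> lam \<mu> \<psi> p q e1 \<epsilon>2 \<longleftrightarrow> (\<exists>s. G s = e1)" for e1
    proof
      assume "REE_exists \<beta> \<sigma> lam \<mu> \<psi> p q e1 \<epsilon>2"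
      then obtain \<pi>1 \<pi>2 where F: "e1 = c * (1-p) * (\<pi>1 - \<pi>2) + hf \<sigma> \<psi> \<mu> \<pi>1"
              "\<epsilon>2 = b * (\<pi>2 - \<pi>1) + hf \<sigma> \<psi> \<mu> \<pi>2" using red b_def by auto
      have "P1 \<pi>2 = \<pi>1" unfolding P1_def using F(2) bpos by (simp add: field_simps)
      then have "G \<pi>2 = e1" unfolding G_def using F(1) by simp
      then show "\<exists>s. G s = e1" by blast
    next
      assume "\<exists>s. G s = e1"
      then obtain s where s: "G s = e1" by blast
      have "\<epsilon>2 = b * (s - P1 s) + hf \<sigma> \<psi> \<mu> s" unfolding P1_def using bpos by (simp add: field_simps)
      then show "REE_exists \<beta> \<sigma> lam \<mu> \<psi> p q e1 \<epsilon>2" unfolding red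
        using s unfolding G_def b_def by blast
    qed
    have contP: "continuous_on UNIV P1" unfolding P1_def using bpos
      by (intro continuous_intros) auto
    have contG: "continuous_on UNIV G" unfolding G_def
      by (intro continuous_intros contP)
    define \<alpha> where "\<alpha> = 1 - \<sigma>/b"
    define \<gamma> where "\<gamma> = (-\<sigma>*\<mu> - \<epsilon>2)/b"
    obtain T A B where TAB: "\<forall>s\<le>T. hf \<sigma> \<psi> \<mu> (\<alpha>*s+\<gamma>) = A*s + B"
      using hf_left_aff[OF psi0 \<open>0 < \<mu>\<close>] by blast
    have left: "\<forall>s\<le>min T (-\<mu>/\<psi>). G s = (c*(1-p)*(\<alpha>-1) + A)*s + (c*(1-p)*\<gamma> + B)"
    proof (intro allI impI)
      fix s assume s: "s \<le> min T (-\<mu>/\<psi>)"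
      have hs: "hf \<sigma> \<psi> \<mu> s = \<sigma> * (-\<mu> - s)" using hf_left[OF psi0] s by simp
      have "P1 s = s + (\<sigma> * (-\<mu> - s) - \<epsilon>2)/b" unfolding P1_def hs ..
      also have "\<dots> = \<alpha>*s+\<gamma>" unfolding \<alpha>_def \<gamma>_def using bpos
        by (simp add: field_simps)
      finally have "P1 s = \<alpha>*s+\<gamma>" .
      moreover have "hf \<sigma> \<psi> \<mu> (\<alpha>*s+\<gamma>) = A*s + B" using TAB s by simp
      ultimately show "G s = (c*(1-p)*(\<alpha>-1) + A)*s + (c*(1-p)*\<gamma> + B)"
        unfolding G_def by (simp add: algebra_simps)
    qed
    define \<alpha>' where "\<alpha>' = 1 + \<sigma>*(\<psi>-1)/b"
    define \<gamma>' where "\<gamma>' = -\<epsilon>2/b"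
    have al': "\<alpha>' \<ge> 1" unfolding \<alpha>'_def using assms bpos by simp
    obtain T' where T': "\<forall>s\<ge>T'. hf \<sigma> \<psi> \<mu> (\<alpha>'*s+\<gamma>') = \<sigma> * (\<psi> - 1) * (\<alpha>'*s+\<gamma>')"
    proof -
      have "\<alpha>' > 0" using al' by simp
      from hf_right_aff[OF psi0 \<open>0 < \<mu>\<close> this, of \<sigma> \<gamma>'] that show ?thesis by blast
    qed
    have right: "\<forall>s\<ge>max 0 T'. G s = (c*(1-p)*(\<alpha>'-1) + \<sigma>*(\<psi>-1)*\<alpha>')*s + (c*(1-p)*\<gamma>' + \<sigma>*(\<psi>-1)*\<gamma>')"
    proof (intro allI impI)
      fix s assume s: "s \<ge> max 0 T'"
      have "\<psi> * s \<ge> -\<mu>" using s psi0 assms by (smt (verit) mult_nonneg_nonneg)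
      then have hs: "hf \<sigma> \<psi> \<mu> s = \<sigma> * (\<psi> - 1) * s" using hf_right by blast
      have "P1 s = s + (\<sigma> * (\<psi> - 1) * s - \<epsilon>2)/b" unfolding P1_def hs ..
      also have "\<dots> = \<alpha>'*s+\<gamma>'" unfolding \<alpha>'_def \<gamma>'_def using bpos
        by (simp add: field_simps)
      finally have "P1 s = \<alpha>'*s+\<gamma>'" .
      moreover have "hf \<sigma> \<psi> \<mu> (\<alpha>'*s+\<gamma>') = \<sigma> * (\<psi> - 1) * (\<alpha>'*s+\<gamma>')" using T' s by simp
      ultimately show "G s = (c*(1-p)*(\<alpha>'-1) + \<sigma>*(\<psi>-1)*\<alpha>')*s + (c*(1-p)*\<gamma>' + \<sigma>*(\<psi>-1)*\<gamma>')"
        unfolding G_def by (simp add: algebra_simps)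
    qed
    have slope: "c*(1-p)*(\<alpha>'-1) + \<sigma>*(\<psi>-1)*\<alpha>' > 0"
    proof -
      have "c*(1-p)*(\<alpha>'-1) \<ge> 0" using a0 al' by simp
      moreover have "\<sigma>*(\<psi>-1)*\<alpha>' > 0" using assms al' by simp
      ultimately show ?thesis by linarith
    qed
    obtain e where "e < \<infinity>" "\<forall>y. (\<exists>s. G s = y) \<longleftrightarrow> ereal y \<ge> e"
      using key[OF contG left right slope] by blast
    then show ?thesis using eqv by blast
  next
    case False
    then have q1: "q = 1" using assms by simp
    define K where "K s = c*(1-p)*s + hf \<sigma> \<psi> \<mu> s" for s
    have contK: "continuous_on UNIV K" unfolding K_def by (intro continuous_intros)
    obtain T A B where TAB: "\<forall>s\<le>T. hf \<sigma> \<psi> \<mu> (1*s+0) = A*s + B"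
      using hf_left_aff[OF psi0 \<open>0 < \<mu>\<close>] by blast
    have left: "\<forall>s\<le>T. K s = (c*(1-p) + A)*s + B"
      unfolding K_def using TAB by (simp add: algebra_simps)
    have right: "\<forall>s\<ge>0. K s = (c*(1-p) + \<sigma>*(\<psi>-1))*s + 0"
    proof (intro allI impI)
      fix s :: real assume s: "s \<ge> 0"
      have "\<psi> * s \<ge> -\<mu>" using s psi0 assms by (smt (verit) mult_nonneg_nonneg)
      then have "hf \<sigma> \<psi> \<mu> s = \<sigma> * (\<psi> - 1) * s" using hf_right by blast
      then show "K s = (c*(1-p) + \<sigma>*(\<psi>-1))*s + 0" unfolding K_def by (simp add: algebra_simps)
    qed
    have slope: "c*(1-p) + \<sigma>*(\<psi>-1) > 0" using a0 assms by (smt (verit) mult_pos_pos)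
    obtain e0 where e0: "e0 < \<infinity>" "\<forall>y. (\<exists>s. K s = y) \<longleftrightarrow> ereal y \<ge> e0"
      using key[OF contK left right slope] by blast
    define r where "r = \<epsilon>2 / (\<sigma>*(\<psi>-1))"
    have r0: "r \<ge> 0" unfolding r_def using assms by simp
    have hr: "hf \<sigma> \<psi> \<mu> r = \<epsilon>2"
    proof -
      have "\<psi> * r \<ge> -\<mu>" using r0 psi0 assms by (smt (verit) mult_nonneg_nonneg)
      then have "hf \<sigma> \<psi> \<mu> r = \<sigma> * (\<psi> - 1) * r" using hf_right by blast
      then show ?thesis unfolding r_def using assms by simp
    qed
    have rmax: "\<pi>2 \<le> r" if "hf \<sigma> \<psi> \<mu> \<pi>2 = \<epsilon>2" for \<pi>2
    proof (cases "\<psi> * \<pi>2 \<ge> -\<mu>")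
      case True
      then have "\<sigma> * (\<psi> - 1) * \<pi>2 = \<epsilon>2" using hf_right that by metis
      then have "\<pi>2 = r" unfolding r_def using assms by (simp add: field_simps)
      then show ?thesis by simp
    next
      case False
      then have "\<psi> * \<pi>2 < 0" using assms by linarith
      then have "\<pi>2 < 0" using psi0 by (simp add: mult_less_0_iff)
      then show ?thesis using r0 by linarith
    qed
    define d where "d = c*(1-p)*r"
    have eqv: "REE_exists \<beta> \<sigma> lam \<mu> \<psi> p q e1 \<epsilon>2 \<longleftrightarrow> ereal (e1 + d) \<ge> e0" for e1
    proof
      assume "REE_exists \<beta> \<sigma> lam \<mu> \<psi> p q e1 \<epsilon>2"
      then obtain \<pi>1 \<pi>2 where F: "e1 = c * (1-p) * (\<pi>1 - \<pi>2) + hf \<sigma> \<psi> \<mu> \<pi>1"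
              "\<epsilon>2 = hf \<sigma> \<psi> \<mu> \<pi>2" using red q1 by auto
      have "K \<pi>1 = e1 + c*(1-p)*\<pi>2" unfolding K_def F(1) by (simp add: algebra_simps)
      then have "ereal (e1 + c*(1-p)*\<pi>2) \<ge> e0" using e0 by blast
      moreover have "c*(1-p)*\<pi>2 \<le> d" unfolding d_def using rmax F(2) a0
        by (simp add: mult_left_mono)
      ultimately show "ereal (e1 + d) \<ge> e0" by (meson add_left_mono ereal_less_eq(3) order_trans)
    next
      assume "ereal (e1 + d) \<ge> e0"
      then obtain s where s: "K s = e1 + d" using e0 by blast
      have "e1 = c * (1-p) * (s - r) + hf \<sigma> \<psi> \<mu> s" using s unfolding K_def d_def
        by (simp add: algebra_simps)
      moreover have "\<epsilon>2 = c * (1-q) * (r - s) + hf \<sigma> \<psi> \<mu> r" using hr q1 by simp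
      ultimately show "REE_exists \<beta> \<sigma> lam \<mu> \<psi> p q e1 \<epsilon>2" unfolding red by blast
    qed
    show ?thesis
    proof (intro exI[of _ "e0 - ereal d"] conjI allI)
      show "e0 - ereal d < \<infinity>" using e0(1) by (cases e0) auto
      fix e1 show "REE_exists \<beta> \<sigma> lam \<mu> \<psi> p q e1 \<epsilon>2 \<longleftrightarrow> e0 - ereal d \<le> ereal e1"
        unfolding eqv by (cases e0) auto
    qed
  qed
qed

end
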